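(* Let $Z$ be an absolutely continuous real random variable with cdf $F$, let $(z_n)_{n\ge1}$ be a real sequence with $z_n\to z$, and let $\beta\in(0,1]$. Then $LD_S^\beta(z_n,F)\to LD_S^\beta(z,F)$ as $n\to\infty$.
   Context: $\lambda_z^\beta=\inf\{\lambda>0: F(z+\lambda)-F(z-\lambda)\ge\beta\}$ and $LD_S^\beta(z,F)=\frac{2}{\beta^2}\big(F(z+\lambda_z^\beta)-F(z)\big)\big(F(z)-F(z-\lambda_z^\beta)\big)$. *)

theory Defs
  imports "HOL-Probability.Probability"
begin

definition lam_set :: "(real \<Rightarrow> real) \<Rightarrow> real \<Rightarrow> real \<Rightarrow> real set" where
  "lam_set F beta z = {l. l > 0 \<and> F (z + l) - F (z - l) \<ge> beta}"

text \<open>lambda_z^beta = inf of lam_set (only meaningful when lam_set is nonempty;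
  otherwise it is +infinity, handled in LD_S below).\<close>
definition lambda_beta :: "(real \<Rightarrow> real) \<Rightarrow> real \<Rightarrow> real \<Rightarrow> real" where
  "lambda_beta F beta z = Inf (lam_set F beta z)"

text \<open>LD_S^beta(z,F). If lambda = +infinity (empty set), then with the conventions
  F(+infinity) = 1 and F(-infinity) = 0 the value is 2/beta^2 (1 - F z) F z.\<close>
definition LD_S :: "real \<Rightarrow> real \<Rightarrow> (real \<Rightarrow> real) \<Rightarrow> real" where
  "LD_S beta z F =
     (if lam_set F beta z \<noteq> {} then
        2 / beta\<^sup>2 * (F (z + lambda_beta F beta z) - F z) * (F z - F (z - lambda_beta F beta z))
      else 2 / beta\<^sup>2 * (1 - F z) * F z)"

end

theory Submission imports Defs begin

lemma subseq_crit:
  fixes X :: "nat \<Rightarrow> real"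
  assumes "\<And>r::nat\<Rightarrow>nat. strict_mono r \<Longrightarrow> \<exists>s::nat\<Rightarrow>nat. strict_mono s \<and> (X \<circ> r \<circ> s) \<longlonglongrightarrow> L"
  shows "X \<longlonglongrightarrow> L"
proof (rule ccontr)
  assume "\<not> X \<longlonglongrightarrow> L"
  then obtain e where e: "e > 0" and fr: "\<forall>N. \<exists>n\<ge>N. \<not> dist (X n) L < e"
    unfolding LIMSEQ_def by (metis not_le)
  have "infinite {n. \<not> dist (X n) L < e}"
    using fr by (simp add: infinite_nat_iff_unbounded_le)
  then obtain r :: "nat \<Rightarrow> nat" where r: "strict_mono r" "\<And>n. r n \<in> {n. \<not> dist (X n) L < e}"
    using infinite_enumerate by blast
  obtain s where "strict_mono s" "(X \<circ> r \<circ> s) \<longlonglongrightarrow> L" using assms[OF r(1)] by blast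
  then obtain N where "\<And>n. n \<ge> N \<Longrightarrow> dist ((X \<circ> r \<circ> s) n) L < e"
    using e unfolding LIMSEQ_def by blast
  then show False using r(2)[of "s N"] by auto
qed

locale Fsetting =
  fixes F :: "real \<Rightarrow> real" and beta :: real
  assumes Fc: "\<And>x. isCont F x"
    and Fmono: "\<And>x y. x \<le> y \<Longrightarrow> F x \<le> F y"
    and F0: "\<And>x. 0 \<le> F x" and F1: "\<And>x. F x \<le> 1"
    and bpos: "0 < beta" and ble: "beta \<le> 1"
begin

lemma Fcon: "continuous_on UNIV F"
  using Fc by (simp add: continuous_at_imp_continuous_on)

lemma Gcon: "continuous_on UNIV (\<lambda>l. F (z + l) - F (z - l))"
  by (intro continuous_intros continuous_on_compose2[OF Fcon]) auto

lemma lam_props: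
  assumes ne: "lam_set F beta z \<noteq> {}"
  shows "lambda_beta F beta z \<in> lam_set F beta z"
    "F (z + lambda_beta F beta z) - F (z - lambda_beta F beta z) = beta"
    "\<And>l. l \<in> lam_set F beta z \<Longrightarrow> lambda_beta F beta z \<le> l"
proof -
  let ?G = "\<lambda>l. F (z + l) - F (z - l)"
  have eq: "lam_set F beta z = {l. 0 \<le> l} \<inter> {l. beta \<le> ?G l}"
    using bpos unfolding lam_set_def by (auto simp: order.order_iff_strict)
  have cl: "closed (lam_set F beta z)"
    unfolding eq by (intro closed_Int closed_Collect_le continuous_intros Gcon)
  have bb: "bdd_below (lam_set F beta z)"
    unfolding lam_set_def by (rule bdd_belowI[of _ 0]) auto
  show mem: "lambda_beta F beta z \<in> lam_set F beta z"
    unfolding lambda_beta_def using closed_contains_Inf[OF ne bb cl] .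
  show low: "\<And>l. l \<in> lam_set F beta z \<Longrightarrow> lambda_beta F beta z \<le> l"
    unfolding lambda_beta_def using bb by (simp add: cInf_lower)
  let ?lam = "lambda_beta F beta z"
  have "?G 0 \<le> beta" using bpos by simp
  moreover have "beta \<le> ?G ?lam" using mem unfolding lam_set_def by simp
  moreover have "0 \<le> ?lam" using mem unfolding lam_set_def by simp
  moreover have "continuous_on {0..?lam} ?G" using Gcon continuous_on_subset by blast
  ultimately obtain x where x: "0 \<le> x" "x \<le> ?lam" "?G x = beta"
    using IVT'[of ?G 0 beta ?lam] by blast
  have "x \<noteq> 0" using x bpos by auto
  then have "x \<in> lam_set F beta z" using x unfolding lam_set_def by auto
  then have "?lam \<le> x" using low by blast
  then show "?G ?lam = beta" using x by simp
qed

lemma flat: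
  assumes "F (z + l1) - F (z - l1) = beta" "F (z + l2) - F (z - l2) = beta"
  shows "F (z + l1) = F (z + l2) \<and> F (z - l1) = F (z - l2)"
proof (cases "l1 \<le> l2")
  case True
  have "F (z + l1) \<le> F (z + l2)" "F (z - l2) \<le> F (z - l1)" using True Fmono by auto
  then show ?thesis using assms by linarith
next
  case False
  have "F (z + l2) \<le> F (z + l1)" "F (z - l1) \<le> F (z - l2)" using False Fmono by auto
  then show ?thesis using assms by linarith
qed

lemma LD_eq:
  assumes "lam_set F beta z \<noteq> {}" "F (z + l) - F (z - l) = beta"
  shows "LD_S beta z F = 2 / beta\<^sup>2 * (F (z + l) - F z) * (F z - F (z - l))"
  using flat[OF lam_props(2)[OF assms(1)] assms(2)] assms(1) unfolding LD_S_def by simp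

lemma cont_lt1:
  assumes ne: "\<And>z. lam_set F beta z \<noteq> {}"
    and zs: "zs \<longlonglongrightarrow> z"
  shows "(\<lambda>n. LD_S beta (zs n) F) \<longlonglongrightarrow> LD_S beta z F"
proof (rule subseq_crit)
  fix r :: "nat \<Rightarrow> nat" assume r: "strict_mono r"
  define y where "y = zs \<circ> r"
  have y: "y \<longlonglongrightarrow> z" unfolding y_def using LIMSEQ_subseq_LIMSEQ[OF zs r] .
  define m where "m n = lambda_beta F beta (y n)" for n
  obtain B where B: "\<And>n. norm (y n - z) \<le> B"
    using convergent_imp_Bseq[OF convergentI[OF tendsto_diff[OF y tendsto_const[of z]]]]
    unfolding Bseq_def by (metis less_imp_le)
  let ?L = "lambda_beta F beta z"
  have mb: "0 \<le> m n \<and> m n \<le> ?L + B" for n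
  proof -
    have Lp: "?L > 0" "beta \<le> F (z + ?L) - F (z - ?L)"
      using lam_props(1)[OF ne] unfolding lam_set_def by auto
    let ?d = "\<bar>y n - z\<bar>"
    have "F (z + ?L) \<le> F (y n + (?L + ?d))" "F (y n - (?L + ?d)) \<le> F (z - ?L)"
      by (intro Fmono; simp)+
    then have "?L + ?d \<in> lam_set F beta (y n)" using Lp unfolding lam_set_def by auto
    then have "m n \<le> ?L + ?d" unfolding m_def using lam_props(3)[OF ne] by blast
    moreover have "?d \<le> B" using B[of n] by simp
    moreover have "0 \<le> m n" using lam_props(1)[OF ne, of "y n"] unfolding m_def lam_set_def by simp
    ultimately show ?thesis by linarith
  qed
  have "\<forall>x\<in>range m. norm x \<le> \<bar>?L\<bar> + \<bar>B\<bar>"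
  proof
    fix x assume "x \<in> range m"
    then obtain n where "x = m n" by auto
    with mb[of n] show "norm x \<le> \<bar>?L\<bar> + \<bar>B\<bar>" by auto
  qed
  then have "bounded (range m)"
    unfolding bounded_iff by blast
  then obtain l s where s: "strict_mono s" and ms: "(m \<circ> s) \<longlonglongrightarrow> l"
    using bounded_imp_convergent_subsequence by blast
  have ys: "(y \<circ> s) \<longlonglongrightarrow> z" using LIMSEQ_subseq_LIMSEQ[OF y s] .
  have p: "(\<lambda>n. F (y (s n) + m (s n))) \<longlonglongrightarrow> F (z + l)"
    by (rule isCont_tendsto_compose[OF Fc]) (intro tendsto_intros ys[unfolded comp_def] ms[unfolded comp_def])
  have q: "(\<lambda>n. F (y (s n) - m (s n))) \<longlonglongrightarrow> F (z - l)"
    by (rule isCont_tendsto_compose[OF Fc]) (intro tendsto_intros ys[unfolded comp_def] ms[unfolded comp_def])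
  have o: "(\<lambda>n. F (y (s n))) \<longlonglongrightarrow> F z"
    by (rule isCont_tendsto_compose[OF Fc]) (intro ys[unfolded comp_def])
  have Gn: "F (y (s n) + m (s n)) - F (y (s n) - m (s n)) = beta" for n
    unfolding m_def using lam_props(2)[OF ne] .
  have "(\<lambda>n. F (y (s n) + m (s n)) - F (y (s n) - m (s n))) \<longlonglongrightarrow> F (z + l) - F (z - l)"
    using tendsto_diff[OF p q] .
  then have Gl: "F (z + l) - F (z - l) = beta" using Gn by (simp add: LIMSEQ_const_iff)
  have "(\<lambda>n. 2 / beta\<^sup>2 * (F (y (s n) + m (s n)) - F (y (s n))) * (F (y (s n)) - F (y (s n) - m (s n))))
        \<longlonglongrightarrow> 2 / beta\<^sup>2 * (F (z + l) - F z) * (F z - F (z - l))"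
    by (intro tendsto_intros p q o)
  moreover have "LD_S beta (y (s n)) F = 2 / beta\<^sup>2 * (F (y (s n) + m (s n)) - F (y (s n))) * (F (y (s n)) - F (y (s n) - m (s n)))" for n
    using LD_eq[OF ne Gn[of n]] .
  ultimately have "(\<lambda>n. LD_S beta (y (s n)) F) \<longlonglongrightarrow> LD_S beta z F"
    using LD_eq[OF ne Gl] by simp
  then show "\<exists>s. strict_mono s \<and> ((\<lambda>n. LD_S beta (zs n) F) \<circ> r \<circ> s) \<longlonglongrightarrow> LD_S beta z F"
    using s unfolding y_def by (auto simp: comp_def)
qed

lemma LD_one:
  assumes "beta = 1"
  shows "LD_S beta z F = 2 * (1 - F z) * F z"
proof (cases "lam_set F beta z = {}")
  case True then show ?thesis using assms unfolding LD_S_def by simp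
next
  case False
  have "F (z + lambda_beta F beta z) - F (z - lambda_beta F beta z) = 1"
    using lam_props(2)[OF False] assms by simp
  then have "F (z + lambda_beta F beta z) = 1" "F (z - lambda_beta F beta z) = 0"
    using F0 F1 by (smt)+
  then show ?thesis using False assms unfolding LD_S_def by simp
qed

end

theorem mainTheorem12:
  fixes P :: "'a measure" and Z :: "'a \<Rightarrow> real" and F :: "real \<Rightarrow> real"
    and zs :: "nat \<Rightarrow> real" and z beta :: real
  assumes "prob_space P"
    and "Z \<in> borel_measurable P"
    and "absolutely_continuous lborel (distr P borel Z)"
    and "F = cdf (distr P borel Z)"
    and "zs \<longlonglongrightarrow> z"
    and "0 < beta" and "beta \<le> 1"
  shows "(\<lambda>n. LD_S beta (zs n) F) \<longlonglongrightarrow> LD_S beta z F"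
proof -
  define M where "M = distr P borel Z"
  interpret real_distribution M
    unfolding M_def using prob_space.real_distribution_distr[OF assms(1) assms(2)] .
  have FM: "F = cdf M" using assms(4) M_def by simp
  have Fc: "isCont F x" for x
  proof -
    have "{x} \<in> null_sets lborel" by (simp add: null_sets_def)
    then have "{x} \<in> null_sets M" using assms(3) unfolding M_def absolutely_continuous_def by blast
    then have "measure M {x} = 0" by (rule measure_eq_0_null_sets)
    then show ?thesis unfolding FM using isCont_cdf by blast
  qed
  interpret Fsetting F beta
    by unfold_locales (use Fc in \<open>auto simp: cdf_nondecreasing cdf_nonneg cdf_bounded_prob FM assms(6,7)\<close>)
  show ?thesis
  proof (cases "beta = 1")
    case True
    have "(\<lambda>n. 2 * (1 - F (zs n)) * F (zs n)) \<longlonglongrightarrow> 2 * (1 - F z) * F z"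
      by (intro tendsto_intros isCont_tendsto_compose[OF Fc] assms(5))
    then show ?thesis using LD_one[OF True] by simp
  next
    case False
    then have b1: "beta < 1" using assms(7) by simp
    define e where "e = (1 - beta) / 2"
    have e: "e > 0" using b1 unfolding e_def by simp
    have "\<forall>\<^sub>F x in at_top. 1 - e < F x"
      using order_tendstoD(1)[OF cdf_lim_at_top_prob[folded FM]] e by simp
    then obtain A where A: "\<And>x. x \<ge> A \<Longrightarrow> 1 - e < F x" by (auto simp: eventually_at_top_linorder)
    have "\<forall>\<^sub>F x in at_bot. F x < e"
      using order_tendstoD(2)[OF cdf_lim_at_bot[folded FM]] e by simp
    then obtain B where B: "\<And>x. x \<le> B \<Longrightarrow> F x < e" by (auto simp: eventually_at_bot_linorder)
    have ne: "lam_set F beta y \<noteq> {}" for y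
    proof -
      define l where "l = max 1 (max (A - y) (y - B))"
      have "1 - e < F (y + l)" "F (y - l) < e" using A B unfolding l_def by auto
      moreover have "0 < l" unfolding l_def by simp
      ultimately have "beta \<le> F (y + l) - F (y - l)" "0 < l" unfolding e_def by (auto simp: field_simps)
      then have "l \<in> lam_set F beta y" unfolding lam_set_def by simp
      then show ?thesis by blast
    qed
    show ?thesis using cont_lt1[OF ne assms(5)] .
  qed
qed

end
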